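(* Let $\Gamma\in\mathcal{H}$, $q\in\mathbb{N}^*$ and $k\in\mathbb{N}^*$. There exists $l\in\mathbb{N}^*$ such that for every $f\in P_l^{C_q^{-1}(\Gamma)}$, the torus map $C_q f C_q^{-1}$ belongs to $P_k^\Gamma$.
   Context: $\mathbb{T}^2=\mathbb{R}^2/\mathbb{Z}^2$, $R_\theta(x)=x+\theta$; $\overline{\mathcal{O}}^{\infty}(\mathbb{T}^2)$ is the $C^\infty$-closure of $\{h\circ R_\theta\circ h^{-1}: h\in\mathrm{Diff}^\infty(\mathbb{T}^2),\theta\in\mathbb{T}^2\}$ (its elements are homotopic to the identity). $C_q$ is the linear map with matrix $\begin{pmatrix}1/q&0\\0&1\end{pmatrix}$; for a torus diffeomorphism $f$ homotopic to the identity with lift $\tilde f$, $C_q f C_q^{-1}$ denotes the torus diffeomorphism obtained as the quotient of $C_q\circ\tilde f\circ C_q^{-1}$ (which commutes with $\mathbb{Z}^2$-translations). $\mathcal{H}$ is the set of non-empty compact subsets of $\mathbb{R}^2$ modulo translations and positive-ratio homotheties; $C_q^{-1}(\Gamma)$ is the type of $C_q^{-1}(\hat\Gamma)$, $\hat\Gamma\in\Gamma$. For $r>0$, $K\in\mathcal{LA}_r(\Gamma)$ means $K$ non-empty compact, $\mathrm{diam}(K)>r$ and some $\hat\Gamma\in\Gamma$ of diameter $1$ satisfies $d_H(K/\mathrm{diam}(K),\hat\Gamma)<1/r$. With $D=[0,1]^2$, $P_k^\Gamma=\{f\in\overline{\mathcal{O}}^{\infty}(\mathbb{T}^2): \exists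 n\in\mathbb{N}^*,\ \tilde f^n(D)\in\mathcal{LA}_k(\Gamma)\}$ with $\tilde f$ any lift. *)

theory Defs
  imports "HOL-Analysis.Analysis"
begin

text \<open>The plane R^2 is modelled as real \<times> real; a map of the torus T^2 = R^2/Z^2
  homotopic to the identity is represented by a lift F : R^2 \<Rightarrow> R^2 commuting
  with integer translations.\<close>

type_synonym pt = "real \<times> real"

definition Z2 :: "pt set" where
  "Z2 = {(a, b) | a b. a \<in> \<int> \<and> b \<in> \<int>}"

fun pd :: "pt list \<Rightarrow> (pt \<Rightarrow> pt) \<Rightarrow> pt \<Rightarrow> pt" where
  "pd [] g = g"
| "pd (e # es) g = (\<lambda>x. vector_derivative (\<lambda>t. pd es g (x + t *\<^sub>R e)) (at 0))"

definition smooth :: "(pt \<Rightarrow> pt) \<Rightarrow> bool" where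
  "smooth g \<longleftrightarrow> (\<forall>es. set es \<subseteq> Basis \<longrightarrow>
      continuous_on UNIV (pd es g) \<and>
      (\<forall>e\<in>Basis. \<forall>x. (\<lambda>t. pd es g (x + t *\<^sub>R e)) differentiable (at 0)))"

text \<open>Lifts of C^\<infinity> diffeomorphisms of T^2 (arbitrary homotopy class).\<close>
definition torus_diffeo_lift :: "(pt \<Rightarrow> pt) \<Rightarrow> bool" where
  "torus_diffeo_lift H \<longleftrightarrow> bij H \<and> smooth H \<and> smooth (inv H) \<and>
     (\<forall>x m. m \<in> Z2 \<longrightarrow> H (x + m) - H x \<in> Z2) \<and>
     (\<forall>x m. m \<in> Z2 \<longrightarrow> inv H (x + m) - inv H x \<in> Z2)"

text \<open>Lifts homotopic to the identity: commute with Z^2 translations.\<close>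
definition commutes_Z2 :: "(pt \<Rightarrow> pt) \<Rightarrow> bool" where
  "commutes_Z2 F \<longleftrightarrow> (\<forall>x m. m \<in> Z2 \<longrightarrow> F (x + m) = F x + m)"

text \<open>Lifts of the maps h \<circ> R_\<theta> \<circ> h^{-1} (all lifts: up to integer translation).\<close>
definition conj_rot_lifts :: "(pt \<Rightarrow> pt) set" where
  "conj_rot_lifts = {(\<lambda>x. H (inv H x + \<theta>) + m) | H \<theta> m.
      torus_diffeo_lift H \<and> m \<in> Z2}"

definition Cinf_conv :: "(nat \<Rightarrow> pt \<Rightarrow> pt) \<Rightarrow> (pt \<Rightarrow> pt) \<Rightarrow> bool" where
  "Cinf_conv Fs F \<longleftrightarrow> (\<forall>es. set es \<subseteq> Basis \<longrightarrow>
      uniform_limit UNIV (\<lambda>n. pd es (Fs n)) (pd es F) sequentially)"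

text \<open>Lifts of elements of the C^\<infinity>-closure (in Diff^\<infinity>(T^2)) of the conjugates of rotations.\<close>
definition Obar_lifts :: "(pt \<Rightarrow> pt) set" where
  "Obar_lifts = {F. torus_diffeo_lift F \<and> commutes_Z2 F \<and>
      (\<exists>Fs. (\<forall>n. Fs n \<in> conj_rot_lifts) \<and> Cinf_conv Fs F)}"

text \<open>The space H: non-empty compact sets modulo translations and positive homotheties.\<close>
definition homothety_class :: "pt set \<Rightarrow> pt set set" where
  "homothety_class K = {(\<lambda>x. c *\<^sub>R x + v) ` K | c v. c > 0}"

definition Hspace :: "pt set set set" where
  "Hspace = {homothety_class K | K. compact K \<and> K \<noteq> {}}"

definition Cq :: "nat \<Rightarrow> pt \<Rightarrow> pt" where
  "Cq q = (\<lambda>(x, y). (x / real q, y))"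

definition Cq_inv :: "nat \<Rightarrow> pt \<Rightarrow> pt" where
  "Cq_inv q = (\<lambda>(x, y). (real q * x, y))"

definition Cq_inv_class :: "nat \<Rightarrow> pt set set \<Rightarrow> pt set set" where
  "Cq_inv_class q \<Gamma> = (\<lambda>K. Cq_inv q ` K) ` \<Gamma>"

definition Cq_conj :: "nat \<Rightarrow> (pt \<Rightarrow> pt) \<Rightarrow> pt \<Rightarrow> pt" where
  "Cq_conj q F = Cq q \<circ> F \<circ> Cq_inv q"

definition hausdorff_dist :: "pt set \<Rightarrow> pt set \<Rightarrow> real" where
  "hausdorff_dist A B = max (SUP a\<in>A. infdist a B) (SUP b\<in>B. infdist b A)"

definition LA :: "real \<Rightarrow> pt set set \<Rightarrow> pt set set" where
  "LA r \<Gamma> = {K. compact K \<and> K \<noteq> {} \<and> diameter K > r \<and>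
      (\<exists>G\<in>\<Gamma>. diameter G = 1 \<and>
         hausdorff_dist ((\<lambda>x. (1 / diameter K) *\<^sub>R x) ` K) G < 1 / r)}"

definition unit_square :: "pt set" where
  "unit_square = {0..1} \<times> {0..1}"

text \<open>P_k^\<Gamma>, expressed on lifts (the condition does not depend on the lift chosen).\<close>
definition P :: "nat \<Rightarrow> pt set set \<Rightarrow> (pt \<Rightarrow> pt) set" where
  "P k \<Gamma> = {F \<in> Obar_lifts. \<exists>n::nat. n \<ge> 1 \<and> (F ^^ n) ` unit_square \<in> LA (real k) \<Gamma>}"

end

theory Submission
  imports Defs
begin

lemma Basis_pt: "(Basis :: pt set) = {(1,0),(0,1)}"
  by (auto simp: Basis_prod_def)

lemma pd_Cons': "pd (e # es) g = pd [e] (pd es g)"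
  by simp

lemma pd_append: "pd es (pd es' g) = pd (es @ es') g"
  by (induction es) auto

lemma smooth_coinduct:
  assumes "g \<in> S"
    and "\<And>h. h \<in> S \<Longrightarrow> continuous_on UNIV h"
    and "\<And>h e x. h \<in> S \<Longrightarrow> e \<in> Basis \<Longrightarrow> (\<lambda>t. h (x + t *\<^sub>R e)) differentiable (at 0)"
    and "\<And>h e. h \<in> S \<Longrightarrow> e \<in> Basis \<Longrightarrow> pd [e] h \<in> S"
  shows "smooth g"
proof -
  have "pd es g \<in> S" if "set es \<subseteq> Basis" for es
    using that by (induction es) (use assms in auto)
  then show ?thesis using assms unfolding smooth_def by blast
qed

lemma smooth_pd:
  assumes "smooth g" "e \<in> Basis" shows "smooth (pd [e] g)"
  using assms unfolding smooth_def pd_append by auto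

lemma smooth_cont: "smooth g \<Longrightarrow> continuous_on UNIV g"
  unfolding smooth_def by (metis empty_subsetI pd.simps(1) set_empty)

lemma smooth_vd:
  assumes "smooth g" "e \<in> Basis"
  shows "((\<lambda>t. g (x + t *\<^sub>R e)) has_vector_derivative pd [e] g x) (at 0)"
proof -
  have "(\<lambda>t. g (x + t *\<^sub>R e)) differentiable (at 0)"
    using assms unfolding smooth_def by (metis empty_subsetI pd.simps(1) set_empty)
  then show ?thesis by (simp add: vector_derivative_works)
qed

lemma line_shift:
  assumes "((\<lambda>t. g (x + t *\<^sub>R e)) has_vector_derivative v) (at 0)"
  shows "((\<lambda>t. g (x + (t - s) *\<^sub>R e)) has_vector_derivative v) (at s)"
proof -
  have "((\<lambda>t. t - s) has_vector_derivative 1) (at s)"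
    by (auto intro!: derivative_eq_intros)
  from vector_diff_chain_at[OF this, of "\<lambda>t. g (x + t *\<^sub>R e)" v] assms
  show ?thesis by (simp add: o_def)
qed

lemma smooth_C1:
  fixes g :: "pt \<Rightarrow> pt"
  assumes "smooth g"
  shows "(g has_derivative (\<lambda>v. fst v *\<^sub>R pd [(1,0)] g x + snd v *\<^sub>R pd [(0,1)] g x)) (at x)"
proof -
  obtain x0 y0 where x: "x = (x0, y0)" by (cases x)
  have b1: "(1::real,0::real) \<in> Basis" and b2: "(0::real,1::real) \<in> Basis" by (auto simp: Basis_pt)
  have fx0: "((\<lambda>t. g ((x0, y0) + (t - x0) *\<^sub>R (1,0))) has_vector_derivative pd [(1,0)] g (x0,y0)) (at x0)"
    by (rule line_shift[OF smooth_vd[OF assms b1]])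
  have fx: "((\<lambda>a. g (a, y0)) has_derivative (\<lambda>t. t *\<^sub>R pd [(1,0)] g (x0,y0))) (at x0 within UNIV)"
    using fx0 by (simp add: has_vector_derivative_def)
  have fy: "((\<lambda>b. g (a, b)) has_derivative blinfun_apply (blinfun_scaleR_left (pd [(0,1)] g (a,b)))) (at b within UNIV)" for a b
  proof -
    have "((\<lambda>t. g ((a, b) + (t - b) *\<^sub>R (0,1))) has_vector_derivative pd [(0,1)] g (a,b)) (at b)"
      by (rule line_shift[OF smooth_vd[OF assms b2]])
    then show ?thesis by (simp add: has_vector_derivative_def)
  qed
  have c2: "continuous_on UNIV (pd [(0,1)] g)"
    using assms b2 unfolding smooth_def by (metis empty_subsetI insert_subset list.set(1) list.simps(15))
  have cont: "continuous (at (x0, y0) within UNIV \<times> UNIV) (\<lambda>(a, b). blinfun_scaleR_left (pd [(0,1)] g (a,b)))"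
  proof -
    have "continuous (at (x0,y0)) (\<lambda>p. blinfun_scaleR_left (pd [(0,1)] g p))"
      using c2 by (intro continuous_intros bounded_linear.continuous[OF bounded_linear_blinfun_scaleR_left])
        (simp add: continuous_on_eq_continuous_at)
    moreover have "(\<lambda>(a, b). blinfun_scaleR_left (pd [(0,1)] g (a,b))) = (\<lambda>p. blinfun_scaleR_left (pd [(0,1)] g p))"
      by auto
    ultimately show ?thesis by (simp only: UNIV_Times_UNIV)
  qed
  have "((\<lambda>(a, b). g (a, b)) has_derivative
     (\<lambda>(ta, tb). ta *\<^sub>R pd [(1,0)] g (x0,y0) + blinfun_apply (blinfun_scaleR_left (pd [(0,1)] g (x0,y0))) tb))
     (at (x0, y0) within UNIV \<times> UNIV)"
    by (rule has_derivative_partialsI[OF fx fy cont]) auto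
  then show ?thesis
    by (simp add: x case_prod_beta' split_beta)
qed

inductive_set Rg :: "(pt \<Rightarrow> pt) \<Rightarrow> (pt \<Rightarrow> pt) set" for g where
  base: "smooth f \<Longrightarrow> (\<lambda>x. f (g x)) \<in> Rg g"
| add: "u \<in> Rg g \<Longrightarrow> v \<in> Rg g \<Longrightarrow> (\<lambda>x. u x + v x) \<in> Rg g"
| mul1: "smooth h \<Longrightarrow> u \<in> Rg g \<Longrightarrow> (\<lambda>x. fst (h x) *\<^sub>R u x) \<in> Rg g"
| mul2: "smooth h \<Longrightarrow> u \<in> Rg g \<Longrightarrow> (\<lambda>x. snd (h x) *\<^sub>R u x) \<in> Rg g"

lemma fst_line:
  assumes "smooth h" "e \<in> Basis"
  shows "((\<lambda>t. fst (h (x + t *\<^sub>R e))) has_field_derivative fst (pd [e] h x)) (at 0)"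
  using bounded_linear.has_vector_derivative[OF bounded_linear_fst smooth_vd[OF assms, of x]]
  by (simp add: has_real_derivative_iff_has_vector_derivative del: pd.simps)

lemma snd_line:
  assumes "smooth h" "e \<in> Basis"
  shows "((\<lambda>t. snd (h (x + t *\<^sub>R e))) has_field_derivative snd (pd [e] h x)) (at 0)"
  using bounded_linear.has_vector_derivative[OF bounded_linear_snd smooth_vd[OF assms, of x]]
  by (simp add: has_real_derivative_iff_has_vector_derivative del: pd.simps)

lemma Rg_props:
  assumes g: "smooth g" and u: "u \<in> Rg g"
  shows "continuous_on UNIV u \<and>
    (\<forall>e\<in>Basis. \<exists>u'\<in>Rg g. \<forall>x. ((\<lambda>t. u (x + t *\<^sub>R e)) has_vector_derivative u' x) (at 0))"
  using u
proof induction
  case (base f)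
  have cont: "continuous_on UNIV (\<lambda>x. f (g x))"
    using continuous_on_compose[OF smooth_cont[OF g] continuous_on_subset[OF smooth_cont[OF base]]]
    by (simp add: o_def)
  have "\<exists>u'\<in>Rg g. \<forall>x. ((\<lambda>t. f (g (x + t *\<^sub>R e))) has_vector_derivative u' x) (at 0)"
    if e: "e \<in> Basis" for e
  proof (intro bexI allI)
    fix x
    have gl: "((\<lambda>t. g (x + t *\<^sub>R e)) has_derivative (\<lambda>t. t *\<^sub>R pd [e] g x)) (at 0)"
      using smooth_vd[OF g e, of x] by (simp add: has_vector_derivative_def del: pd.simps)
    have fd: "(f has_derivative (\<lambda>v. fst v *\<^sub>R pd [(1,0)] f (g x) + snd v *\<^sub>R pd [(0,1)] f (g x))) (at (g (x + 0 *\<^sub>R e)))"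
      using smooth_C1[OF base, of "g x"] by simp
    from has_derivative_compose[OF gl fd]
    show "((\<lambda>t. f (g (x + t *\<^sub>R e))) has_vector_derivative
      (fst (pd [e] g x) *\<^sub>R pd [(1,0)] f (g x) + snd (pd [e] g x) *\<^sub>R pd [(0,1)] f (g x))) (at 0)"
      unfolding has_vector_derivative_def
      by (simp add: scaleR_add_right del: pd.simps)
  next
    have s1: "smooth (pd [(1,0)] f)" "smooth (pd [(0,1)] f)" "smooth (pd [e] g)"
      using smooth_pd[OF base] smooth_pd[OF g e] by (auto simp: Basis_pt simp del: pd.simps)
    show "(\<lambda>x. fst (pd [e] g x) *\<^sub>R pd [(1,0)] f (g x) + snd (pd [e] g x) *\<^sub>R pd [(0,1)] f (g x)) \<in> Rg g"
      by (intro Rg.add Rg.mul1 Rg.mul2 Rg.base s1)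
  qed
  then show ?case using cont by blast
next
  case (add u v)
  have cont: "continuous_on UNIV (\<lambda>x. u x + v x)"
    using add by (intro continuous_intros) auto
  have "\<exists>w\<in>Rg g. \<forall>x. ((\<lambda>t. u (x + t *\<^sub>R e) + v (x + t *\<^sub>R e)) has_vector_derivative w x) (at 0)"
    if e: "e \<in> Basis" for e
  proof -
    obtain u' v' where u': "u' \<in> Rg g" "\<And>x. ((\<lambda>t. u (x + t *\<^sub>R e)) has_vector_derivative u' x) (at 0)"
      and v': "v' \<in> Rg g" "\<And>x. ((\<lambda>t. v (x + t *\<^sub>R e)) has_vector_derivative v' x) (at 0)"
      using add e by blast
    show ?thesis
      by (rule bexI[of _ "\<lambda>x. u' x + v' x"]) (auto intro!: has_vector_derivative_add u' v' Rg.add)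
  qed
  then show ?case using cont by blast
next
  case (mul1 h u)
  have cont: "continuous_on UNIV (\<lambda>x. fst (h x) *\<^sub>R u x)"
    using mul1 smooth_cont[OF mul1(1)] by (intro continuous_intros) auto
  have "\<exists>w\<in>Rg g. \<forall>x. ((\<lambda>t. fst (h (x + t *\<^sub>R e)) *\<^sub>R u (x + t *\<^sub>R e)) has_vector_derivative w x) (at 0)"
    if e: "e \<in> Basis" for e
  proof -
    obtain u' where u': "u' \<in> Rg g" "\<And>x. ((\<lambda>t. u (x + t *\<^sub>R e)) has_vector_derivative u' x) (at 0)"
      using mul1 e by blast
    have hs: "smooth (pd [e] h)" using smooth_pd[OF mul1(1) e] .
    show ?thesis
    proof (rule bexI[of _ "\<lambda>x. fst (h x) *\<^sub>R u' x + fst (pd [e] h x) *\<^sub>R u x"], intro allI)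
      fix x
      show "((\<lambda>t. fst (h (x + t *\<^sub>R e)) *\<^sub>R u (x + t *\<^sub>R e)) has_vector_derivative
         fst (h x) *\<^sub>R u' x + fst (pd [e] h x) *\<^sub>R u x) (at 0)"
        using has_vector_derivative_scaleR[OF fst_line[OF mul1(1) e, of x] u'(2)[of x]]
        by (simp del: pd.simps)
    qed (intro Rg.add Rg.mul1 u' hs mul1)
  qed
  then show ?case using cont by blast
next
  case (mul2 h u)
  have cont: "continuous_on UNIV (\<lambda>x. snd (h x) *\<^sub>R u x)"
    using mul2 smooth_cont[OF mul2(1)] by (intro continuous_intros) auto
  have "\<exists>w\<in>Rg g. \<forall>x. ((\<lambda>t. snd (h (x + t *\<^sub>R e)) *\<^sub>R u (x + t *\<^sub>R e)) has_vector_derivative w x) (at 0)"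
    if e: "e \<in> Basis" for e
  proof -
    obtain u' where u': "u' \<in> Rg g" "\<And>x. ((\<lambda>t. u (x + t *\<^sub>R e)) has_vector_derivative u' x) (at 0)"
      using mul2 e by blast
    have hs: "smooth (pd [e] h)" using smooth_pd[OF mul2(1) e] .
    show ?thesis
    proof (rule bexI[of _ "\<lambda>x. snd (h x) *\<^sub>R u' x + snd (pd [e] h x) *\<^sub>R u x"], intro allI)
      fix x
      show "((\<lambda>t. snd (h (x + t *\<^sub>R e)) *\<^sub>R u (x + t *\<^sub>R e)) has_vector_derivative
         snd (h x) *\<^sub>R u' x + snd (pd [e] h x) *\<^sub>R u x) (at 0)"
        using has_vector_derivative_scaleR[OF snd_line[OF mul2(1) e, of x] u'(2)[of x]]
        by (simp del: pd.simps)
    qed (intro Rg.add Rg.mul2 u' hs mul2)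
  qed
  then show ?case using cont by blast
qed

lemma smooth_comp:
  assumes "smooth f" "smooth g"
  shows "smooth (\<lambda>x. f (g x))"
proof (rule smooth_coinduct[where S = "Rg g"])
  show "(\<lambda>x. f (g x)) \<in> Rg g" by (rule Rg.base[OF assms(1)])
next
  fix h assume "h \<in> Rg g" then show "continuous_on UNIV h" using Rg_props[OF assms(2)] by blast
next
  fix h and e :: pt and x assume h: "h \<in> Rg g" and e: "e \<in> Basis"
  then obtain u' where "\<forall>x. ((\<lambda>t. h (x + t *\<^sub>R e)) has_vector_derivative u' x) (at 0)"
    using Rg_props[OF assms(2) h] by blast
  then show "(\<lambda>t. h (x + t *\<^sub>R e)) differentiable (at 0)"
    unfolding differentiable_def has_vector_derivative_def by blast
next
  fix h and e :: pt assume h: "h \<in> Rg g" and e: "e \<in> Basis"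
  then obtain u' where "u' \<in> Rg g" "\<forall>x. ((\<lambda>t. h (x + t *\<^sub>R e)) has_vector_derivative u' x) (at 0)"
    using Rg_props[OF assms(2) h] by blast
  moreover have "pd [e] h = u'"
    using calculation(2) by (auto simp: vector_derivative_at)
  ultimately show "pd [e] h \<in> Rg g" by simp
qed

lemma smooth_affine:
  assumes "linear L" shows "smooth (\<lambda>x. L x + c)"
proof (rule smooth_coinduct[where S = "{\<lambda>x. L x + c | L c. linear L}"])
  show "(\<lambda>x. L x + c) \<in> {\<lambda>x. L x + c | L c. linear L}" using assms by blast
next
  fix h assume "h \<in> {\<lambda>x. L x + c | L c. linear (L :: pt \<Rightarrow> pt)}"
  then obtain L c where h: "h = (\<lambda>x. L x + c)" "linear L" by blast
  show "continuous_on UNIV h" unfolding h(1)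
    by (intro continuous_intros linear_continuous_on linear_conv_bounded_linear[THEN iffD1] h(2))
next
  fix h and e :: pt and x assume "h \<in> {\<lambda>x. L x + c | L c. linear (L :: pt \<Rightarrow> pt)}"
  then obtain L c where h: "h = (\<lambda>x. L x + c)" "linear L" by blast
  have "((\<lambda>t. h (x + t *\<^sub>R e)) has_vector_derivative L e) (at 0)"
  proof -
    have "(\<lambda>t. h (x + t *\<^sub>R e)) = (\<lambda>t. (L x + c) + t *\<^sub>R L e)"
      using h by (auto simp: linear_add linear_scale)
    then show ?thesis by (auto intro!: derivative_eq_intros)
  qed
  then show "(\<lambda>t. h (x + t *\<^sub>R e)) differentiable (at 0)"
    unfolding differentiable_def has_vector_derivative_def by blast
next
  fix h and e :: pt assume "h \<in> {\<lambda>x. L x + c | L c. linear (L :: pt \<Rightarrow> pt)}"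
  then obtain L c where h: "h = (\<lambda>x. L x + c)" "linear L" by blast
  have "((\<lambda>t. h (x + t *\<^sub>R e)) has_vector_derivative L e) (at 0)" for x
  proof -
    have "(\<lambda>t. h (x + t *\<^sub>R e)) = (\<lambda>t. (L x + c) + t *\<^sub>R L e)"
      using h by (auto simp: linear_add linear_scale)
    then show ?thesis by (auto intro!: derivative_eq_intros)
  qed
  then have "pd [e] h = (\<lambda>x. (\<lambda>_. 0) x + L e)"
    by (auto simp: vector_derivative_at)
  moreover have "linear (\<lambda>_::pt. 0::pt)" by (rule linear_zero)
  ultimately show "pd [e] h \<in> {\<lambda>x. L x + c | L c. linear (L :: pt \<Rightarrow> pt)}"
    by (intro CollectI exI[of _ "\<lambda>_. 0"] exI[of _ "L e"]) simp
qed

lemma smooth_linear: "linear L \<Longrightarrow> smooth L"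
  using smooth_affine[of L 0] by simp

lemma smooth_translate: "smooth (\<lambda>x::pt. x + c)"
  using smooth_affine[of "\<lambda>x. x" c] linear_id by (simp add: id_def)

lemma linear_Cq: "linear (Cq q)"
  by (rule linearI) (auto simp: Cq_def split: prod.splits simp: add_divide_distrib)

lemma linear_Cq_inv: "linear (Cq_inv q)"
  by (rule linearI) (auto simp: Cq_inv_def split: prod.splits simp: algebra_simps)

lemma smooth_pds: "smooth G \<Longrightarrow> set es \<subseteq> Basis \<Longrightarrow> smooth (pd es G)"
  unfolding smooth_def pd_append by auto

definition cf :: "nat \<Rightarrow> pt list \<Rightarrow> real" where
  "cf q es = prod_list (map (\<lambda>e. if e = (1,0) then real q else 1) es)"

lemma Cq_inv_basis: "e \<in> Basis \<Longrightarrow> Cq_inv q e = (if e = (1,0) then real q else 1) *\<^sub>R e"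
  by (auto simp: Basis_pt Cq_inv_def)

lemma pd_Cq_conj:
  assumes G: "smooth G" and es: "set es \<subseteq> Basis"
  shows "pd es (Cq_conj q G) = (\<lambda>x. cf q es *\<^sub>R Cq q (pd es G (Cq_inv q x)))"
  using es
proof (induction es)
  case Nil
  then show ?case by (auto simp: Cq_conj_def cf_def)
next
  case (Cons e es)
  then have e: "e \<in> Basis" and es: "set es \<subseteq> Basis" by auto
  define ce where "ce = (if e = (1,0) then real q else 1)"
  have bl: "bounded_linear (\<lambda>v. cf q es *\<^sub>R Cq q v)"
    using linear_Cq[of q] by (intro bounded_linear_scaleR_right[THEN bounded_linear_compose] linear_conv_bounded_linear[THEN iffD1])
  show ?case
  proof
    fix x
    let ?y = "Cq_inv q x"
    have phi: "((\<lambda>s. pd es G (?y + s *\<^sub>R e)) has_vector_derivative pd (e # es) G ?y) (at 0)"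
      using smooth_vd[OF smooth_pds[OF G es] e, of ?y] by (simp only: pd_append append.simps)
    have mul: "((\<lambda>t. ce * t) has_vector_derivative ce) (at 0)"
      by (auto intro!: derivative_eq_intros)
    have comp: "(((\<lambda>s. pd es G (?y + s *\<^sub>R e)) \<circ> (\<lambda>t. ce * t)) has_vector_derivative ce *\<^sub>R pd (e # es) G ?y) (at 0)"
      by (rule vector_diff_chain_at[OF mul]) (use phi in simp)
    have line: "(\<lambda>t. pd es (Cq_conj q G) (x + t *\<^sub>R e)) = (\<lambda>t. cf q es *\<^sub>R Cq q (((\<lambda>s. pd es G (?y + s *\<^sub>R e)) \<circ> (\<lambda>t. ce * t)) t))"
    proof
      fix t
      have "Cq_inv q (x + t *\<^sub>R e) = ?y + (ce * t) *\<^sub>R e"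
        using Cq_inv_basis[OF e, of q] linear_Cq_inv[of q]
        by (simp add: linear_add linear_scale ce_def)
      then show "pd es (Cq_conj q G) (x + t *\<^sub>R e) = cf q es *\<^sub>R Cq q (((\<lambda>s. pd es G (?y + s *\<^sub>R e)) \<circ> (\<lambda>t. ce * t)) t)"
        using Cons(1)[OF es] by simp
    qed
    have "((\<lambda>t. pd es (Cq_conj q G) (x + t *\<^sub>R e)) has_vector_derivative cf q es *\<^sub>R Cq q (ce *\<^sub>R pd (e # es) G ?y)) (at 0)"
      unfolding line by (rule bounded_linear.has_vector_derivative[OF bl comp])
    then have "pd (e # es) (Cq_conj q G) x = cf q es *\<^sub>R Cq q (ce *\<^sub>R pd (e # es) G ?y)"
      by (simp only: pd.simps vector_derivative_at)
    also have "\<dots> = cf q (e # es) *\<^sub>R Cq q (pd (e # es) G ?y)"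
      using linear_Cq[of q] by (simp add: linear_scale cf_def ce_def)
    finally show "pd (e # es) (Cq_conj q G) x = cf q (e # es) *\<^sub>R Cq q (pd (e # es) G (Cq_inv q x))" .
  qed
qed

lemma Z2_iff: "(a, b) \<in> Z2 \<longleftrightarrow> a \<in> \<int> \<and> b \<in> \<int>"
  by (auto simp: Z2_def)

lemma Z2_mem: "p \<in> Z2 \<longleftrightarrow> fst p \<in> \<int> \<and> snd p \<in> \<int>"
  by (cases p) (simp add: Z2_iff)

lemma Z2_add: "p \<in> Z2 \<Longrightarrow> p' \<in> Z2 \<Longrightarrow> p + p' \<in> Z2"
  by (simp add: Z2_mem)

lemma Z2_diff: "p \<in> Z2 \<Longrightarrow> p' \<in> Z2 \<Longrightarrow> p - p' \<in> Z2"
  by (simp add: Z2_mem)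

lemma Z2_zero: "0 \<in> Z2"
  by (simp add: Z2_mem)

lemma Z2_ints: "of_int n *\<^sub>R p \<in> Z2" if "p \<in> Z2"
  using that by (simp add: Z2_mem)

lemma Z2_Cq_inv: "p \<in> Z2 \<Longrightarrow> Cq_inv q p \<in> Z2"
  by (cases p) (auto simp: Cq_inv_def Z2_iff)

lemma ints_sep:
  fixes a b :: real
  assumes "a \<in> \<int>" "b \<in> \<int>" "a \<noteq> b" shows "1 \<le> norm (a - b)"
proof -
  obtain i j where "a = of_int i" "b = of_int j" using assms by (auto elim!: Ints_cases)
  with assms show ?thesis by auto
qed

lemma const_real:
  fixes f :: "pt \<Rightarrow> real"
  assumes "continuous_on UNIV f" "\<And>x. f x \<in> \<int>"
  shows "f x = f 0"
proof -
  have "f constant_on UNIV"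
    by (rule continuous_discrete_range_constant[OF connected_UNIV assms(1)])
      (use assms(2) ints_sep in \<open>auto intro!: exI[of _ 1]\<close>)
  then obtain y where "\<forall>x\<in>UNIV. f x = y" unfolding constant_on_def by blast
  then show ?thesis by (metis UNIV_I)
qed

lemma const_diff:
  fixes H :: "pt \<Rightarrow> pt"
  assumes "continuous_on UNIV H" "\<And>x. H (x + p) - H x \<in> Z2"
  shows "H (x + p) - H x = H p - H 0"
proof -
  have c: "continuous_on UNIV (\<lambda>x. H (x + p) - H x)"
    using assms(1) by (intro continuous_intros continuous_on_compose2[OF assms(1)]) auto
  have "fst (H (x + p) - H x) = fst (H (0 + p) - H 0)"
    by (rule const_real[of "\<lambda>x. fst (H (x + p) - H x)", OF continuous_on_fst[OF c]])
      (use assms(2) in \<open>simp add: Z2_mem\<close>)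
  moreover have "snd (H (x + p) - H x) = snd (H (0 + p) - H 0)"
    by (rule const_real[of "\<lambda>x. snd (H (x + p) - H x)", OF continuous_on_snd[OF c]])
      (use assms(2) in \<open>simp add: Z2_mem\<close>)
  ultimately show ?thesis by (simp add: prod_eq_iff)
qed

definition Dl :: "(pt \<Rightarrow> pt) \<Rightarrow> pt \<Rightarrow> pt" where
  "Dl H p = H p - H 0"

definition Mx :: "(pt \<Rightarrow> pt) \<Rightarrow> pt \<Rightarrow> pt" where
  "Mx H w = fst w *\<^sub>R Dl H (1,0) + snd w *\<^sub>R Dl H (0,1)"

lemma linear_Mx: "linear (Mx H)"
  by (rule linearI) (auto simp: Mx_def algebra_simps)

locale latt =
  fixes H :: "pt \<Rightarrow> pt"
  assumes cont: "continuous_on UNIV H"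
    and per: "\<And>x m. m \<in> Z2 \<Longrightarrow> H (x + m) - H x \<in> Z2"
begin

lemma shift: "p \<in> Z2 \<Longrightarrow> H (x + p) = H x + Dl H p"
  using const_diff[OF cont per, of p x] by (simp add: Dl_def algebra_simps)

lemma Dl_Z2: "p \<in> Z2 \<Longrightarrow> Dl H p \<in> Z2"
  using per[of p 0] by (simp add: Dl_def)

lemma Dl_add: "p \<in> Z2 \<Longrightarrow> p' \<in> Z2 \<Longrightarrow> Dl H (p + p') = Dl H p + Dl H p'"
  using shift[of p' p] by (simp add: Dl_def algebra_simps)

lemma Dl_int: "p \<in> Z2 \<Longrightarrow> Dl H (of_int n *\<^sub>R p) = of_int n *\<^sub>R Dl H p"
proof (induction n rule: int_induct[of _ 0])
  case base then show ?case by (simp add: Dl_def)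
next
  case (step1 i)
  have "Dl H (of_int (i + 1) *\<^sub>R p) = Dl H (of_int i *\<^sub>R p + p)"
    by (simp add: algebra_simps)
  also have "\<dots> = Dl H (of_int i *\<^sub>R p) + Dl H p"
    by (rule Dl_add) (use step1 Z2_ints in auto)
  finally show ?case using step1 by (simp add: algebra_simps)
next
  case (step2 i)
  have "Dl H (of_int i *\<^sub>R p) = Dl H (of_int (i - 1) *\<^sub>R p + p)"
    by (simp add: algebra_simps)
  also have "\<dots> = Dl H (of_int (i - 1) *\<^sub>R p) + Dl H p"
    by (rule Dl_add) (use step2 Z2_ints[of p "i - 1"] in auto)
  finally show ?case using step2 by (simp add: algebra_simps)
qed

lemma Mx_Dl: "p \<in> Z2 \<Longrightarrow> Mx H p = Dl H p"
proof -
  assume p: "p \<in> Z2"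
  obtain a b where ab: "p = (of_int a, of_int b)"
    using p by (cases p) (auto simp: Z2_iff elim!: Ints_cases)
  have e1: "(1::real, 0::real) \<in> Z2" and e2: "(0::real, 1::real) \<in> Z2" by (auto simp: Z2_iff)
  have "p = of_int a *\<^sub>R (1,0) + of_int b *\<^sub>R (0,1)" by (simp add: ab)
  then have "Dl H p = Dl H (of_int a *\<^sub>R (1,0)) + Dl H (of_int b *\<^sub>R (0,1))"
    using Dl_add Z2_ints e1 e2 by metis
  also have "\<dots> = Mx H p" using Dl_int[OF e1] Dl_int[OF e2] by (simp add: Mx_def ab)
  finally show ?thesis by simp
qed

end

lemma latt_pair:
  assumes L1: "latt H" and L2: "latt Hi"
    and inv1: "\<And>x. Hi (H x) = x" and inv2: "\<And>y. H (Hi y) = y"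
  shows "\<And>p. p \<in> Z2 \<Longrightarrow> Dl Hi (Dl H p) = p" "\<And>w. Mx Hi (Mx H w) = w"
proof -
  show D: "Dl Hi (Dl H p) = p" if p: "p \<in> Z2" for p
  proof -
    have "p = Hi (H (0 + p))" by (simp add: inv1)
    also have "\<dots> = Hi (H 0 + Dl H p)" using latt.shift[OF L1 p, of 0] by simp
    also have "\<dots> = Hi (H 0) + Dl Hi (Dl H p)" using latt.shift[OF L2 latt.Dl_Z2[OF L1 p]] by simp
    finally show ?thesis by (simp add: inv1)
  qed
  fix w
  have e1: "(1::real, 0::real) \<in> Z2" and e2: "(0::real, 1::real) \<in> Z2" by (auto simp: Z2_iff)
  have "Mx Hi (Mx H w) = fst w *\<^sub>R Mx Hi (Dl H (1,0)) + snd w *\<^sub>R Mx Hi (Dl H (0,1))"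
    using linear_Mx[of Hi] by (simp add: Mx_def[of H] linear_add linear_scale)
  also have "\<dots> = w"
    using latt.Mx_Dl[OF L2 latt.Dl_Z2[OF L1 e1]] latt.Mx_Dl[OF L2 latt.Dl_Z2[OF L1 e2]] D[OF e1] D[OF e2]
    by (simp add: prod_eq_iff)
  finally show "Mx Hi (Mx H w) = w" .
qed

lemma CC1: "q \<ge> 1 \<Longrightarrow> Cq_inv q (Cq q v) = v"
  by (cases v) (auto simp: Cq_def Cq_inv_def)

lemma CC2: "q \<ge> 1 \<Longrightarrow> Cq q (Cq_inv q v) = v"
  by (cases v) (auto simp: Cq_def Cq_inv_def)

lemma smooth_Cq: "smooth (Cq q)" and smooth_Cq_inv: "smooth (Cq_inv q)"
  by (auto intro: smooth_linear linear_Cq linear_Cq_inv)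

lemma tdl_latt:
  assumes "torus_diffeo_lift H"
  shows "latt H" "latt (inv H)" "\<And>x. inv H (H x) = x" "\<And>y. H (inv H y) = y"
    "smooth H" "smooth (inv H)"
proof -
  have b: "bij H" and s1: "smooth H" and s2: "smooth (inv H)"
    and p1: "\<And>x m. m \<in> Z2 \<Longrightarrow> H (x + m) - H x \<in> Z2"
    and p2: "\<And>x m. m \<in> Z2 \<Longrightarrow> inv H (x + m) - inv H x \<in> Z2"
    using assms unfolding torus_diffeo_lift_def by blast+
  show "latt H" unfolding latt_def using smooth_cont[OF s1] p1 by blast
  show "latt (inv H)" unfolding latt_def using smooth_cont[OF s2] p2 by blast
  show "\<And>x. inv H (H x) = x" using bij_is_inj[OF b] by (rule inv_f_f)
  show "\<And>y. H (inv H y) = y" using bij_is_surj[OF b] by (rule surj_f_inv_f)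
  show "smooth H" "smooth (inv H)" by (fact s1, fact s2)
qed

lemma conj_rot_Cq:
  assumes q: "q \<ge> 1" and F: "F \<in> conj_rot_lifts"
  shows "Cq_conj q F \<in> conj_rot_lifts"
proof -
  obtain H \<theta> m where F: "F = (\<lambda>x. H (inv H x + \<theta>) + m)" and H: "torus_diffeo_lift H" and m: "m \<in> Z2"
    using F unfolding conj_rot_lifts_def by blast
  define Hi where "Hi = inv H"
  note T = tdl_latt[OF H, folded Hi_def]
  have MM1: "Mx Hi (Mx H w) = w" for w using latt_pair(2)[OF T(1,2,3,4)] .
  have MM2: "Mx H (Mx Hi w) = w" for w using latt_pair(2)[OF T(2,1,4,3)] .
  define B where "B = (\<lambda>x. Mx Hi (Cq_inv q x))"
  define H' where "H' = (\<lambda>x. Cq q (H (B x)))"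
  define Hi' where "Hi' = (\<lambda>x. Cq q (Mx H (Hi (Cq_inv q x))))"
  have i1: "Hi' (H' x) = x" for x
    by (simp add: Hi'_def H'_def B_def CC1[OF q] CC2[OF q] T(3) MM2)
  have i2: "H' (Hi' x) = x" for x
    by (simp add: Hi'_def H'_def B_def CC1[OF q] CC2[OF q] T(4) MM1)
  have invH': "inv H' = Hi'" by (rule inv_equality) (use i1 i2 in auto)
  have bij: "bij H'" by (rule o_bij[of Hi']) (use i1 i2 in auto)
  have lin: "linear (Mx H)" "linear (Mx Hi)" "linear (Cq q)" "linear (Cq_inv q)"
    by (auto intro: linear_Mx linear_Cq linear_Cq_inv)
  have sl: "smooth (Mx H)" "smooth (Mx Hi)" "smooth (Cq q)" "smooth (Cq_inv q)"
    using lin by (auto intro: smooth_linear)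
  have sB: "smooth B" unfolding B_def by (rule smooth_comp[OF sl(2) sl(4)])
  have sH': "smooth H'" unfolding H'_def
    by (rule smooth_comp[OF sl(3) smooth_comp[OF T(5) sB]])
  have sHi': "smooth Hi'" unfolding Hi'_def
    by (rule smooth_comp[OF sl(3) smooth_comp[OF sl(1) smooth_comp[OF T(6) sl(4)]]])
  have per1: "H' (x + p) - H' x \<in> Z2" if p: "p \<in> Z2" for x p
  proof -
    have cp: "Cq_inv q p \<in> Z2" by (rule Z2_Cq_inv[OF p])
    have Bp: "B p = Dl Hi (Cq_inv q p)" "B p \<in> Z2"
      using latt.Mx_Dl[OF T(2) cp] latt.Dl_Z2[OF T(2) cp] by (auto simp: B_def)
    have "H (B (x + p)) = H (B x + B p)"
      using lin by (simp add: B_def linear_add)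
    also have "\<dots> = H (B x) + Dl H (B p)" by (rule latt.shift[OF T(1) Bp(2)])
    also have "Dl H (B p) = Cq_inv q p"
      using latt.Mx_Dl[OF T(1) Bp(2)] by (simp add: B_def MM2)
    finally have "H' (x + p) = H' x + p"
      using lin by (simp add: H'_def linear_add CC2[OF q])
    then show ?thesis using p by simp
  qed
  have per2: "Hi' (x + p) - Hi' x \<in> Z2" if p: "p \<in> Z2" for x p
  proof -
    have cp: "Cq_inv q p \<in> Z2" by (rule Z2_Cq_inv[OF p])
    have "Hi (Cq_inv q (x + p)) = Hi (Cq_inv q x + Cq_inv q p)"
      using lin by (simp add: linear_add)
    also have "\<dots> = Hi (Cq_inv q x) + Dl Hi (Cq_inv q p)" by (rule latt.shift[OF T(2) cp])
    finally have "Mx H (Hi (Cq_inv q (x + p))) = Mx H (Hi (Cq_inv q x)) + Cq_inv q p"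
      using lin latt.Mx_Dl[OF T(2) cp, symmetric] by (simp add: linear_add MM2)
    then have "Hi' (x + p) = Hi' x + p"
      using lin by (simp add: Hi'_def linear_add CC2[OF q])
    then show ?thesis using p by simp
  qed
  have tdl: "torus_diffeo_lift H'"
    unfolding torus_diffeo_lift_def invH' using bij sH' sHi' per1 per2 by blast
  define \<theta>' where "\<theta>' = Cq q (Mx H (\<theta> + Dl Hi m))"
  have eq: "Cq_conj q F = (\<lambda>x. H' (inv H' x + \<theta>') + 0)"
  proof
    fix x
    have dm: "Dl Hi m \<in> Z2" by (rule latt.Dl_Z2[OF T(2) m])
    have "B (Hi' x + \<theta>') = Hi (Cq_inv q x) + (\<theta> + Dl Hi m)"
      using lin by (simp add: B_def Hi'_def \<theta>'_def linear_add CC1[OF q] MM1)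
    then have "H (B (Hi' x + \<theta>')) = H (Hi (Cq_inv q x) + \<theta>) + Dl H (Dl Hi m)"
      using latt.shift[OF T(1) dm, of "Hi (Cq_inv q x) + \<theta>"] by (simp add: add.assoc)
    also have "Dl H (Dl Hi m) = m" using latt_pair(1)[OF T(2,1,4,3) m] .
    finally have *: "H (B (Hi' x + \<theta>')) = H (Hi (Cq_inv q x) + \<theta>) + m" .
    show "Cq_conj q F x = H' (inv H' x + \<theta>') + 0"
      unfolding invH' using * by (simp add: H'_def Cq_conj_def F Hi_def)
  qed
  show ?thesis unfolding eq conj_rot_lifts_def using tdl Z2_zero by blast
qed

lemma smooth_conj_rot: "F \<in> conj_rot_lifts \<Longrightarrow> smooth F"
proof -
  assume "F \<in> conj_rot_lifts"
  then obtain H \<theta> m where F: "F = (\<lambda>x. H (inv H x + \<theta>) + m)" and H: "torus_diffeo_lift H"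
    unfolding conj_rot_lifts_def by blast
  note T = tdl_latt[OF H]
  have "smooth (\<lambda>x. inv H x + \<theta>)" by (rule smooth_comp[OF smooth_translate T(6)])
  then have "smooth (\<lambda>x. H (inv H x + \<theta>))" by (rule smooth_comp[OF T(5)])
  then show "smooth F" unfolding F by (rule smooth_comp[OF smooth_translate])
qed

lemma commutes_Cq:
  assumes "commutes_Z2 G" "m \<in> Z2" "q \<ge> 1"
  shows "Cq_conj q G (x + m) = Cq_conj q G x + m"
proof -
  have "G (Cq_inv q x + Cq_inv q m) = G (Cq_inv q x) + Cq_inv q m"
    using assms Z2_Cq_inv unfolding commutes_Z2_def by blast
  then show ?thesis
    using linear_Cq[of q] linear_Cq_inv[of q]
    using assms(3) by (cases m) (auto simp: Cq_conj_def linear_add Cq_def Cq_inv_def)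
qed

lemma norm_Cq: "q \<ge> 1 \<Longrightarrow> norm (Cq q v) \<le> norm v"
proof (cases v)
  case (Pair a b)
  assume q: "q \<ge> 1"
  have q1: "real q \<ge> 1" using q by simp
  have "\<bar>a\<bar> \<le> \<bar>a\<bar> * real q" using q1 by (simp add: mult_le_cancel_left1)
  then have "\<bar>a\<bar> / real q \<le> \<bar>a\<bar>" using q1 by (simp add: pos_divide_le_eq)
  then have "\<bar>a / real q\<bar> \<le> \<bar>a\<bar>" by simp
  then have "(a / real q)^2 \<le> a^2" by (metis abs_le_square_iff)
  moreover have "(\<bar>a\<bar> / real q)^2 = (a / real q)^2" by (simp add: power_divide)
  ultimately have "(\<bar>a\<bar> / real q)^2 \<le> a^2" by simp
  then show ?thesis by (simp add: Pair Cq_def norm_Pair)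
qed

lemma cf_nonneg: "cf q es \<ge> 0"
  unfolding cf_def by (induction es) auto

lemma Obar_Cq:
  assumes q: "q \<ge> 1" and F: "F \<in> Obar_lifts"
  shows "Cq_conj q F \<in> Obar_lifts"
proof -
  have tdl: "torus_diffeo_lift F" and com: "commutes_Z2 F"
    and Fs: "\<exists>Fs. (\<forall>n. Fs n \<in> conj_rot_lifts) \<and> Cinf_conv Fs F"
    using F unfolding Obar_lifts_def by blast+
  note T = tdl_latt[OF tdl]
  have comi: "commutes_Z2 (inv F)"
    unfolding commutes_Z2_def
  proof (intro allI impI)
    fix x m assume m: "m \<in> Z2"
    have "F (inv F x + m) = F (inv F x) + m" using com m unfolding commutes_Z2_def by blast
    then have "F (inv F x + m) = x + m" by (simp add: T(4))
    then show "inv F (x + m) = inv F x + m" using T(3) by metis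
  qed
  have i1: "Cq_conj q (inv F) (Cq_conj q F x) = x" for x
    by (simp add: Cq_conj_def CC1[OF q] CC2[OF q] T(3))
  have i2: "Cq_conj q F (Cq_conj q (inv F) x) = x" for x
    by (simp add: Cq_conj_def CC1[OF q] CC2[OF q] T(4))
  have invC: "inv (Cq_conj q F) = Cq_conj q (inv F)" by (rule inv_equality) (use i1 i2 in auto)
  have bij: "bij (Cq_conj q F)" by (rule o_bij[of "Cq_conj q (inv F)"]) (use i1 i2 in auto)
  have sm: "smooth (Cq_conj q G)" if "smooth G" for G
    unfolding Cq_conj_def o_def
    by (rule smooth_comp[OF smooth_Cq smooth_comp[OF that smooth_Cq_inv]])
  have tdl': "torus_diffeo_lift (Cq_conj q F)"
    unfolding torus_diffeo_lift_def invC
  proof (intro conjI allI impI bij sm T(5) T(6))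
    fix x m assume m: "m \<in> Z2"
    show "Cq_conj q F (x + m) - Cq_conj q F x \<in> Z2" using commutes_Cq[OF com m q] m by simp
    show "Cq_conj q (inv F) (x + m) - Cq_conj q (inv F) x \<in> Z2" using commutes_Cq[OF comi m q] m by simp
  qed
  have com': "commutes_Z2 (Cq_conj q F)"
    unfolding commutes_Z2_def using commutes_Cq[OF com _ q] by blast
  obtain Fs where Fs1: "\<And>n. Fs n \<in> conj_rot_lifts" and Fs2: "Cinf_conv Fs F" using Fs by blast
  have "Cinf_conv (\<lambda>n. Cq_conj q (Fs n)) (Cq_conj q F)"
    unfolding Cinf_conv_def
  proof (intro allI impI)
    fix es :: "pt list" assume es: "set es \<subseteq> Basis"
    have ul: "uniform_limit UNIV (\<lambda>n. pd es (Fs n)) (pd es F) sequentially"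
      using Fs2 es unfolding Cinf_conv_def by blast
    define c where "c = cf q es + 1"
    have c: "c > 0" using cf_nonneg[of q es] by (simp add: c_def)
    show "uniform_limit UNIV (\<lambda>n. pd es (Cq_conj q (Fs n))) (pd es (Cq_conj q F)) sequentially"
      unfolding pd_Cq_conj[OF smooth_conj_rot[OF Fs1] es] pd_Cq_conj[OF T(5) es] uniform_limit_iff
    proof (intro allI impI)
      fix \<epsilon> :: real assume \<epsilon>: "\<epsilon> > 0"
      have "\<forall>\<^sub>F n in sequentially. \<forall>y\<in>UNIV. dist (pd es (Fs n) y) (pd es F y) < \<epsilon> / c"
        using ul c \<epsilon> unfolding uniform_limit_iff by simp
      then show "\<forall>\<^sub>F n in sequentially. \<forall>x\<in>UNIV.
          dist (cf q es *\<^sub>R Cq q (pd es (Fs n) (Cq_inv q x))) (cf q es *\<^sub>R Cq q (pd es F (Cq_inv q x))) < \<epsilon>"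
      proof eventually_elim
        case (elim n)
        show ?case
        proof
          fix x :: pt
          let ?a = "pd es (Fs n) (Cq_inv q x)" and ?b = "pd es F (Cq_inv q x)"
          have "dist (cf q es *\<^sub>R Cq q ?a) (cf q es *\<^sub>R Cq q ?b) = cf q es * norm (Cq q (?a - ?b))"
            using linear_Cq[of q] cf_nonneg[of q es]
          proof -
            have "cf q es *\<^sub>R Cq q ?a - cf q es *\<^sub>R Cq q ?b = cf q es *\<^sub>R Cq q (?a - ?b)"
              using linear_Cq[of q] by (simp add: linear_diff scaleR_diff_right)
            then show ?thesis using cf_nonneg[of q es] by (simp add: dist_norm)
          qed
          also have "\<dots> \<le> cf q es * norm (?a - ?b)"
            by (rule mult_left_mono[OF norm_Cq[OF q] cf_nonneg])
          also have "\<dots> \<le> c * norm (?a - ?b)" by (rule mult_right_mono) (auto simp: c_def)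
          also have "\<dots> < c * (\<epsilon> / c)"
          proof (rule mult_strict_left_mono[OF _ c])
            show "norm (?a - ?b) < \<epsilon> / c" using elim[rule_format, of "Cq_inv q x"] by (simp add: dist_norm)
          qed
          also have "\<dots> = \<epsilon>" using c by simp
          finally show "dist (cf q es *\<^sub>R Cq q ?a) (cf q es *\<^sub>R Cq q ?b) < \<epsilon>" .
        qed
      qed
    qed
  qed
  then show ?thesis
    unfolding Obar_lifts_def using tdl' com' conj_rot_Cq[OF q Fs1]
    by (intro CollectI conjI exI[of _ "\<lambda>n. Cq_conj q (Fs n)"]) auto
qed

definition close :: "pt set \<Rightarrow> pt set \<Rightarrow> real \<Rightarrow> bool" where
  "close A B e \<longleftrightarrow> (\<forall>a\<in>A. \<exists>b\<in>B. dist a b \<le> e) \<and> (\<forall>b\<in>B. \<exists>a\<in>A. dist a b \<le> e)"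

lemma close_sym: "close A B e \<Longrightarrow> close B A e"
  unfolding close_def by (metis dist_commute)

lemma close_trans:
  assumes "close A B e" "close B C d" shows "close A C (e + d)"
  unfolding close_def
proof (intro conjI ballI)
  fix a assume "a \<in> A"
  then obtain b where b: "b \<in> B" "dist a b \<le> e" using assms(1) unfolding close_def by blast
  then obtain c where c: "c \<in> C" "dist b c \<le> d" using assms(2) unfolding close_def by blast
  have "dist a c \<le> dist a b + dist b c" by (rule dist_triangle)
  then show "\<exists>c\<in>C. dist a c \<le> e + d" using b c by (intro bexI[of _ c]) auto
next
  fix c assume "c \<in> C"
  then obtain b where b: "b \<in> B" "dist b c \<le> d" using assms(2) unfolding close_def by blast
  then obtain a where a: "a \<in> A" "dist a b \<le> e" using assms(1) unfolding close_def by blast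
  have "dist a c \<le> dist a b + dist b c" by (rule dist_triangle)
  then show "\<exists>a\<in>A. dist a c \<le> e + d" using a b by (intro bexI[of _ a]) auto
qed

lemma close_mono: "close A B e \<Longrightarrow> e \<le> d \<Longrightarrow> close A B d"
  unfolding close_def by (meson order_trans)

lemma close_image:
  assumes "close A B e" "\<And>x y. dist (f x) (f y) \<le> L * dist x y" "L \<ge> 0"
  shows "close (f ` A) (f ` B) (L * e)"
  unfolding close_def
proof (intro conjI ballI)
  fix x assume "x \<in> f ` A"
  then obtain a where a: "a \<in> A" "x = f a" by blast
  then obtain b where b: "b \<in> B" "dist a b \<le> e" using assms(1) unfolding close_def by blast
  have "dist (f a) (f b) \<le> L * e"
    using assms(2)[of a b] mult_left_mono[OF b(2) assms(3)] by linarith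
  then show "\<exists>y\<in>f ` B. dist x y \<le> L * e" using a b by blast
next
  fix y assume "y \<in> f ` B"
  then obtain b where b: "b \<in> B" "y = f b" by blast
  then obtain a where a: "a \<in> A" "dist a b \<le> e" using assms(1) unfolding close_def by blast
  have "dist (f a) (f b) \<le> L * e"
    using assms(2)[of a b] mult_left_mono[OF a(2) assms(3)] by linarith
  then show "\<exists>x\<in>f ` A. dist x y \<le> L * e" using a b by blast
qed

lemma close_maps:
  assumes "\<And>x. x \<in> S \<Longrightarrow> dist (f x) (g x) \<le> e"
  shows "close (f ` S) (g ` S) e"
  unfolding close_def
proof (intro conjI ballI)
  fix y assume "y \<in> f ` S"
  then obtain x where x: "x \<in> S" "y = f x" by blast
  then show "\<exists>b\<in>g ` S. dist y b \<le> e" using assms[OF x(1)] by blast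
next
  fix y assume "y \<in> g ` S"
  then obtain x where x: "x \<in> S" "y = g x" by blast
  then show "\<exists>a\<in>f ` S. dist a y \<le> e" using assms[OF x(1)] by blast
qed

lemma hd_close:
  assumes A: "compact A" "A \<noteq> {}" and B: "compact B" "B \<noteq> {}"
  shows "close A B (hausdorff_dist A B)"
proof -
  have bdd: "bdd_above ((\<lambda>a. infdist a Y) ` X)" if "compact X" "compact Y" for X Y :: "pt set"
  proof -
    have "compact ((\<lambda>a. infdist a Y) ` X)"
      by (rule compact_continuous_image[OF _ that(1)]) (intro continuous_intros)
    then show ?thesis by (intro bounded_imp_bdd_above compact_imp_bounded)
  qed
  have one: "\<exists>b\<in>Y. dist a b \<le> (SUP a\<in>X. infdist a Y)"
    if h: "compact X" "compact Y" "Y \<noteq> {}" "a \<in> X" for X Y :: "pt set" and a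
  proof -
    obtain b where b: "b \<in> Y" "infdist a Y = dist a b"
      using infdist_attains_inf[OF compact_imp_closed[OF h(2)] h(3)] by blast
    have "infdist a Y \<le> (SUP a\<in>X. infdist a Y)"
      by (rule cSUP_upper[OF h(4) bdd[OF h(1,2)]])
    then show ?thesis using b by auto
  qed
  show ?thesis unfolding close_def hausdorff_dist_def
  proof (intro conjI ballI)
    fix a assume "a \<in> A"
    then obtain b where "b \<in> B" "dist a b \<le> (SUP a\<in>A. infdist a B)" using one[OF A(1) B] by blast
    then show "\<exists>b\<in>B. dist a b \<le> max (SUP a\<in>A. infdist a B) (SUP b\<in>B. infdist b A)" by force
  next
    fix b assume "b \<in> B"
    then obtain a where "a \<in> A" "dist b a \<le> (SUP b\<in>B. infdist b A)" using one[OF B(1) A] by blast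
    then show "\<exists>a\<in>A. dist a b \<le> max (SUP a\<in>A. infdist a B) (SUP b\<in>B. infdist b A)"
      by (metis dist_commute max.coboundedI2)
  qed
qed

lemma close_hd:
  assumes "A \<noteq> {}" "B \<noteq> {}" "close A B e"
  shows "hausdorff_dist A B \<le> e"
  unfolding hausdorff_dist_def
proof (rule max.boundedI)
  show "(SUP a\<in>A. infdist a B) \<le> e"
  proof (rule cSUP_least[OF assms(1)])
    fix a assume "a \<in> A"
    then obtain b where "b \<in> B" "dist a b \<le> e" using assms(3) unfolding close_def by blast
    then show "infdist a B \<le> e" using infdist_le[of b B a] by linarith
  qed
  show "(SUP b\<in>B. infdist b A) \<le> e"
  proof (rule cSUP_least[OF assms(2)])
    fix b assume "b \<in> B"
    then obtain a where "a \<in> A" "dist a b \<le> e" using assms(3) unfolding close_def by blast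
    then show "infdist b A \<le> e" using infdist_le[of a A b] by (simp add: dist_commute)
  qed
qed

lemma close_diam:
  assumes "bounded A" "bounded B" "A \<noteq> {}" "B \<noteq> {}" "close A B e"
  shows "diameter A \<le> diameter B + 2 * e"
proof (rule diameter_le)
  show "A \<noteq> {} \<or> 0 \<le> diameter B + 2 * e" using assms by simp
  fix x y assume xy: "x \<in> A" "y \<in> A"
  obtain b1 where b1: "b1 \<in> B" "dist x b1 \<le> e" using assms(5) xy unfolding close_def by blast
  obtain b2 where b2: "b2 \<in> B" "dist y b2 \<le> e" using assms(5) xy unfolding close_def by blast
  have "dist b1 b2 \<le> diameter B" by (rule diameter_bounded_bound[OF assms(2) b1(1) b2(1)])
  moreover have "dist x y \<le> dist x b1 + dist b1 y" by (rule dist_triangle)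
  moreover have "dist b1 y \<le> dist b1 b2 + dist b2 y" by (rule dist_triangle)
  moreover have "dist b2 y = dist y b2" by (rule dist_commute)
  ultimately have "dist x y \<le> diameter B + 2 * e" using b1 b2 by linarith
  then show "norm (x - y) \<le> diameter B + 2 * e" by (simp add: dist_norm)
qed

lemma diam_lip:
  fixes f :: "pt \<Rightarrow> pt"
  assumes "bounded S" "S \<noteq> {}" "\<And>x y. dist (f x) (f y) \<le> L * dist x y" "L \<ge> 0"
  shows "diameter (f ` S) \<le> L * diameter S"
proof (rule diameter_le)
  show "f ` S \<noteq> {} \<or> 0 \<le> L * diameter S" using assms by simp
  fix x y assume "x \<in> f ` S" "y \<in> f ` S"
  then obtain a b where ab: "a \<in> S" "b \<in> S" "x = f a" "y = f b" by blast
  have "dist (f a) (f b) \<le> L * dist a b" by (rule assms(3))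
  also have "\<dots> \<le> L * diameter S"
    by (rule mult_left_mono[OF diameter_bounded_bound[OF assms(1) ab(1,2)] assms(4)])
  finally show "norm (x - y) \<le> L * diameter S" using ab by (simp add: dist_norm)
qed

lemma diam_affine:
  fixes v :: pt and S :: "pt set"
  assumes "bounded S" "S \<noteq> {}" "c > 0"
  shows "diameter ((\<lambda>x. c *\<^sub>R x + v) ` S) = c * diameter S"
proof (rule antisym)
  have d: "dist (c *\<^sub>R x + v) (c *\<^sub>R y + v) = c * dist x y" for x y :: pt
  proof -
    have "dist (c *\<^sub>R x + v) (c *\<^sub>R y + v) = norm (c *\<^sub>R (x - y))"
      by (simp add: dist_norm algebra_simps)
    then show ?thesis using assms(3) by (simp add: dist_norm)
  qed
  show "diameter ((\<lambda>x. c *\<^sub>R x + v) ` S) \<le> c * diameter S"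
    by (rule diam_lip[OF assms(1,2)]) (use d assms(3) in auto)
  let ?T = "(\<lambda>x. c *\<^sub>R x + v) ` S"
  have "?T = (\<lambda>x. v + x) ` ((\<lambda>x. c *\<^sub>R x) ` S)" by (auto simp: image_image add.commute)
  then have T: "bounded ?T" "?T \<noteq> {}"
    using assms bounded_translation[OF bounded_scaling[OF assms(1)]] by auto
  have bk: "(\<lambda>x. (1/c) *\<^sub>R x + (- (1/c) *\<^sub>R v)) ` ?T = S"
    using assms(3) by (force simp: image_image algebra_simps)
  have d2: "dist ((1/c) *\<^sub>R x + (- (1/c) *\<^sub>R v)) ((1/c) *\<^sub>R y + (- (1/c) *\<^sub>R v)) = (1/c) * dist x y" for x y :: pt
  proof -
    have "dist ((1/c) *\<^sub>R x + (- (1/c) *\<^sub>R v)) ((1/c) *\<^sub>R y + (- (1/c) *\<^sub>R v)) = norm ((1/c) *\<^sub>R (x - y))"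
      by (simp add: dist_norm algebra_simps)
    then show ?thesis using assms(3) by (simp add: dist_norm)
  qed
  have "diameter S \<le> (1/c) * diameter ?T"
    using diam_lip[OF T, of "\<lambda>x. (1/c) *\<^sub>R x + (- (1/c) *\<^sub>R v)" "1/c"] d2 assms(3) bk by simp
  then show "c * diameter S \<le> diameter ?T" using assms(3) by (simp add: field_simps)
qed

lemma arith_main:
  fixes Q K r dK e g dE :: real
  assumes Q: "Q \<ge> 1" and K: "K \<ge> 1" and r: "r = 20 * Q^2 * (K + 1)" and dK: "dK > r"
    and e: "e \<le> Q + dK / r" and e0: "e \<ge> 0" and g: "g * Q \<ge> 1" and dE: "dE \<ge> dK * g - 2 * e"
  shows "dE > K \<and> 3 * e / dE < 1 / K"
proof -
  have r0: "r > 0" using Q K r by simp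
  have dK0: "dK > 0" using dK r0 by simp
  have rQ: "r \<ge> 20 * Q * (K + 1)" using Q K r by (simp add: power2_eq_square mult_right_mono)
  have a: "dK / r \<le> dK / (20 * Q * (K + 1))"
    by (rule divide_left_mono[OF rQ]) (use dK0 Q K r0 in \<open>auto intro!: mult_pos_pos\<close>)
  have b: "dK * g \<ge> dK / Q"
    using g Q dK0 by (simp add: divide_le_eq mult.assoc[symmetric] mult.commute[of dK])
  have c1: "dK / (20 * Q * (K + 1)) \<le> dK / (40 * Q)"
    by (rule divide_left_mono) (use dK0 Q K r0 in \<open>auto intro!: mult_pos_pos\<close>)
  have dKQ: "dK / Q > 20 * Q * (K + 1)"
  proof -
    have "20 * Q * (K + 1) * Q = r" using r by (simp add: power2_eq_square algebra_simps)
    then show ?thesis using dK Q by (simp add: pos_less_divide_eq)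
  qed
  have dEb: "dE \<ge> dK / Q - 2 * Q - dK / (20 * Q)"
  proof -
    have "dK / (40 * Q) = (dK / Q) / 40" by simp
    moreover have "dK / (20 * Q) = (dK / Q) / 20" by simp
    ultimately show ?thesis using dE b e a c1 by linarith
  qed
  have "dE > K"
  proof -
    have "dK / (20 * Q) = (dK / Q) / 20" by simp
    then have "dE \<ge> (19/20) * (dK / Q) - 2 * Q" using dEb by linarith
    moreover have "(19/20) * (dK / Q) > 19 * Q * (K + 1)" using dKQ by linarith
    moreover have "19 * Q * (K + 1) - 2 * Q \<ge> 17 * Q * K" using Q K by (simp add: algebra_simps)
    moreover have "17 * Q * K \<ge> 17 * K" using Q K by simp
    ultimately show ?thesis using K by linarith
  qed
  moreover have "3 * e * K < dE"
  proof -
    have "K / (K + 1) \<le> 1" using K by simp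
    have "e \<le> Q + dK / (20 * Q * (K + 1))" using e a by linarith
    then have "3 * K * e \<le> 3 * K * (Q + dK / (20 * Q * (K + 1)))"
      by (rule mult_left_mono) (use K in simp)
    then have h1: "3 * e * K \<le> 3 * Q * K + 3 * (K * (dK / (20 * Q * (K + 1))))"
      by (simp add: algebra_simps)
    have h2: "K * (dK / (20 * Q * (K + 1))) = (K / (K + 1)) * ((dK / Q) / 20)"
      by (simp add: field_simps)
    have h3: "(K / (K + 1)) * ((dK / Q) / 20) \<le> (dK / Q) / 20"
      using \<open>K / (K + 1) \<le> 1\<close> dKQ Q K dK0 by (intro mult_left_le_one_le) auto
    have a: "3 * e * K \<le> 3 * Q * K + 3 * ((dK / Q) / 20)" using h1 h2 h3 by linarith
    have b: "dK / (20 * Q) = (dK / Q) / 20" by simp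
    have c: "(dK / Q) * (16/20) > 16 * Q * (K + 1)"
      using dKQ by (simp add: algebra_simps)
    have d: "16 * Q * (K + 1) \<ge> 3 * Q * K + 2 * Q" using Q K by (simp add: algebra_simps)
    define D where "D = dK / Q"
    have c': "3 * Q * K + 2 * Q < D * (16/20)" using c d unfolding D_def by linarith
    have "3 * e * K \<le> 3 * Q * K + 3 * (D / 20)" using a unfolding D_def .
    moreover have "D - 2 * Q - D / 20 \<le> dE" using dEb b unfolding D_def by simp
    ultimately show ?thesis using c' by linarith
  qed
  ultimately show ?thesis
  proof (intro conjI)
    assume h: "dE > K" "3 * e * K < dE"
    show "dE > K" by (fact h(1))
    have "3 * e < dE / K" using h(2) K by (simp add: pos_less_divide_eq)
    then have "3 * e / dE < (dE / K) / dE" using h(1) K by (intro divide_strict_right_mono) auto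
    also have "(dE / K) / dE = 1 / K" using h(1) K by simp
    finally show "3 * e / dE < 1 / K" .
  qed
qed

lemma funpow_Cq: "q \<ge> 1 \<Longrightarrow> (Cq_conj q F ^^ n) = Cq_conj q (F ^^ n)"
proof (induction n)
  case 0 then show ?case by (auto simp: Cq_conj_def CC2)
next
  case (Suc n) then show ?case by (auto simp: Cq_conj_def CC1)
qed

lemma funpow_commutes:
  assumes "commutes_Z2 F" shows "commutes_Z2 (F ^^ n)"
proof (induction n)
  case 0 then show ?case by (simp add: commutes_Z2_def)
next
  case (Suc n)
  show ?case unfolding commutes_Z2_def
  proof (intro allI impI)
    fix x m assume m: "m \<in> Z2"
    have 1: "(F ^^ n) (x + m) = (F ^^ n) x + m" using Suc m unfolding commutes_Z2_def by blast
    have 2: "F ((F ^^ n) x + m) = F ((F ^^ n) x) + m" using assms m unfolding commutes_Z2_def by blast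
    show "(F ^^ Suc n) (x + m) = (F ^^ Suc n) x + m" using 1 2 by simp
  qed
qed

lemma funpow_cont: "continuous_on UNIV (F :: pt \<Rightarrow> pt) \<Longrightarrow> continuous_on UNIV (F ^^ n)"
proof (induction n)
  case 0
  have "(F ^^ 0) = (\<lambda>x. x)" by (simp add: fun_eq_iff)
  then show ?case by (simp add: continuous_on_id)
next
  case (Suc n)
  have "(F ^^ Suc n) = (\<lambda>x. F ((F ^^ n) x))" by (simp add: fun_eq_iff)
  moreover have "continuous_on UNIV (\<lambda>x. F ((F ^^ n) x))"
    by (rule continuous_on_compose2[OF Suc(2) Suc(1)[OF Suc(2)]]) auto
  ultimately show ?case by simp
qed

lemma hom_class_affine:
  assumes "S \<in> homothety_class K0" "a > 0"
  shows "(\<lambda>x. a *\<^sub>R x + w) ` S \<in> homothety_class K0"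
proof -
  obtain c v where S: "S = (\<lambda>x. c *\<^sub>R x + v) ` K0" "c > 0"
    using assms(1) unfolding homothety_class_def by blast
  have "(\<lambda>x. a *\<^sub>R x + w) ` S = (\<lambda>x. (a * c) *\<^sub>R x + (a *\<^sub>R v + w)) ` K0"
    unfolding S image_image by (simp add: algebra_simps)
  moreover have "a * c > 0" using S(2) assms(2) by simp
  ultimately show ?thesis unfolding homothety_class_def by blast
qed

lemma norm_Cq_inv: "norm (Cq_inv q v) \<le> real q * norm v" if "q \<ge> 1"
proof (cases v)
  case (Pair a b)
  have q1: "real q \<ge> 1" using that by simp
  have "(real q * a)^2 + b^2 \<le> (real q)^2 * (a^2 + b^2)"
  proof -
    have "b^2 \<le> (real q)^2 * b^2" using q1 by (simp add: mult_le_cancel_right1 power_mono)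
    then show ?thesis by (simp add: power_mult_distrib algebra_simps)
  qed
  then have "sqrt ((real q * a)^2 + b^2) \<le> sqrt ((real q)^2 * (a^2 + b^2))"
    by (rule real_sqrt_le_mono)
  also have "\<dots> = real q * sqrt (a^2 + b^2)" by (simp add: real_sqrt_mult)
  finally show ?thesis by (simp add: Pair Cq_inv_def norm_Pair)
qed

lemma dist_Cq: "q \<ge> 1 \<Longrightarrow> dist (Cq q x) (Cq q y) \<le> 1 * dist x y"
  using norm_Cq[of q "x - y"] linear_Cq[of q] by (simp add: dist_norm linear_diff)

lemma dist_Cq_inv: "q \<ge> 1 \<Longrightarrow> dist (Cq_inv q x) (Cq_inv q y) \<le> real q * dist x y"
  using norm_Cq_inv[of q "x - y"] linear_Cq_inv[of q] by (simp add: dist_norm linear_diff)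

lemma dist_scale: "c \<ge> 0 \<Longrightarrow> dist (c *\<^sub>R x) (c *\<^sub>R y) \<le> c * dist x y"
  for x y :: pt
proof -
  assume c: "c \<ge> 0"
  have "dist (c *\<^sub>R x) (c *\<^sub>R y) = norm (c *\<^sub>R (x - y))" by (simp add: dist_norm algebra_simps)
  then show ?thesis using c by (simp add: dist_norm)
qed

lemma close_nonneg: "close A B e \<Longrightarrow> A \<noteq> {} \<Longrightarrow> e \<ge> 0"
  unfolding close_def by (meson all_not_in_conv dist_not_less_zero order_trans linorder_not_le)

lemma compact_us: "compact unit_square" "unit_square \<noteq> {}"
  by (auto simp: unit_square_def intro: compact_Times)

lemma close_cover:
  assumes q: "q \<ge> 1" and com: "commutes_Z2 G"
  shows "close (G ` (Cq_inv q ` unit_square)) (G ` unit_square) (real q)"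
  unfolding close_def
proof (intro conjI ballI)
  fix y assume "y \<in> G ` (Cq_inv q ` unit_square)"
  then obtain a b where w: "0 \<le> a" "a \<le> 1" "0 \<le> b" "b \<le> 1" and y: "y = G (real q * a, b)"
    by (auto simp: unit_square_def Cq_inv_def)
  define j where "j = floor (real q * a)"
  have j0: "0 \<le> real_of_int j" "real_of_int j \<le> real q * a" "real q * a - real_of_int j < 1"
    using w unfolding j_def by (auto simp: of_int_floor_le) linarith
  have x: "(real q * a - real_of_int j, b) \<in> unit_square"
    using j0 w by (auto simp: unit_square_def)
  have m: "(real_of_int j, 0) \<in> Z2" by (auto simp: Z2_iff)
  have "G ((real q * a - real_of_int j, b) + (real_of_int j, 0)) = G (real q * a - real_of_int j, b) + (real_of_int j, 0)"
    using com m unfolding commutes_Z2_def by blast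
  then have y2: "y = G (real q * a - real_of_int j, b) + (real_of_int j, 0)" by (simp add: y)
  have "dist y (G (real q * a - real_of_int j, b)) = \<bar>real_of_int j\<bar>"
    by (simp add: y2 dist_norm norm_Pair)
  also have "\<dots> \<le> real q" using j0 w q
    by (simp) (metis mult_left_le order_trans of_nat_0_le_iff)
  finally show "\<exists>b\<in>G ` unit_square. dist y b \<le> real q" using x by blast
next
  fix x assume "x \<in> G ` unit_square"
  then obtain w where w: "w \<in> unit_square" "x = G w" by blast
  have "Cq q w \<in> unit_square" using w(1) q
    by (cases w) (auto simp: unit_square_def Cq_def divide_le_eq_1)
  moreover have "w = Cq_inv q (Cq q w)" using CC1[OF q] by simp
  ultimately have "x \<in> G ` (Cq_inv q ` unit_square)" using w by blast
  then show "\<exists>a\<in>G ` (Cq_inv q ` unit_square). dist a x \<le> real q" by (intro bexI[of _ x]) auto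
qed

lemma LA_transfer:
  assumes q: "q \<ge> 1" and k: "k \<ge> 1" and Gam: "\<Gamma> \<in> Hspace"
    and l: "l = 20 * q^2 * (k + 1)"
    and F: "F \<in> Obar_lifts"
    and LA1: "(F ^^ n) ` unit_square \<in> LA (real l) (Cq_inv_class q \<Gamma>)"
  shows "(Cq_conj q F ^^ n) ` unit_square \<in> LA (real k) \<Gamma>"
proof -
  have tdl: "torus_diffeo_lift F" and com: "commutes_Z2 F" using F unfolding Obar_lifts_def by blast+
  define Fn where "Fn = F ^^ n"
  have Fnc: "continuous_on UNIV Fn" unfolding Fn_def
    by (rule funpow_cont[OF smooth_cont[OF tdl_latt(5)[OF tdl]]])
  have Fncom: "commutes_Z2 Fn" unfolding Fn_def by (rule funpow_commutes[OF com])
  define r where "r = real l"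
  have r: "r = 20 * (real q)^2 * (real k + 1)" unfolding r_def l by (simp add: algebra_simps)
  have r0: "r > 0" using q k r by simp
  define Ks where "Ks = Fn ` unit_square"
  have Ks: "compact Ks" "Ks \<noteq> {}"
    unfolding Ks_def using compact_us
    by (auto intro: compact_continuous_image continuous_on_subset[OF Fnc])
  define dK where "dK = diameter Ks"
  obtain G' where LA1': "dK > r" "G' \<in> Cq_inv_class q \<Gamma>" "diameter G' = 1"
    "hausdorff_dist ((\<lambda>x. (1 / dK) *\<^sub>R x) ` Ks) G' < 1 / r"
    using LA1 unfolding LA_def Ks_def Fn_def dK_def r_def by blast
  have dK0: "dK > 0" using LA1'(1) r0 by simp
  obtain K0 where K0: "\<Gamma> = homothety_class K0" "compact K0" "K0 \<noteq> {}"
    using Gam unfolding Hspace_def by blast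
  obtain G1 where G1: "G1 \<in> \<Gamma>" "G' = Cq_inv q ` G1"
    using LA1'(2) unfolding Cq_inv_class_def by blast
  obtain c v where cv: "G1 = (\<lambda>x. c *\<^sub>R x + v) ` K0" "c > 0"
    using G1(1) K0(1) unfolding homothety_class_def by blast
  have G1c: "compact G1" "G1 \<noteq> {}"
    unfolding cv(1) using K0 by (auto intro!: compact_continuous_image continuous_intros)
  have G'c: "compact G'" "G' \<noteq> {}"
    unfolding G1(2) using G1c linear_Cq_inv[of q]
    by (auto intro!: compact_continuous_image linear_continuous_on linear_conv_bounded_linear[THEN iffD1])
  define sK where "sK = (\<lambda>x. (1 / dK) *\<^sub>R x) ` Ks"
  have sKc: "compact sK" "sK \<noteq> {}" unfolding sK_def using Ks by (auto intro: compact_scaling)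
  define \<delta> where "\<delta> = hausdorff_dist sK G'"
  have cl1: "close sK G' \<delta>" unfolding \<delta>_def by (rule hd_close[OF sKc G'c])
  have \<delta>r: "\<delta> < 1 / r" using LA1'(4) unfolding \<delta>_def sK_def .
  have \<delta>0: "\<delta> \<ge> 0" by (rule close_nonneg[OF cl1 sKc(2)])
  have "close ((\<lambda>x. dK *\<^sub>R x) ` sK) ((\<lambda>x. dK *\<^sub>R x) ` G') (dK * \<delta>)"
    by (rule close_image[OF cl1 dist_scale]) (use dK0 in auto)
  moreover have "(\<lambda>x. dK *\<^sub>R x) ` sK = Ks" unfolding sK_def image_image using dK0 by simp
  ultimately have cl2: "close Ks ((\<lambda>x. dK *\<^sub>R x) ` G') (dK * \<delta>)" by simp
  define K' where "K' = Fn ` (Cq_inv q ` unit_square)"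
  have cl3: "close K' Ks (real q)" unfolding K'_def Ks_def by (rule close_cover[OF q Fncom])
  have cl4: "close K' ((\<lambda>x. dK *\<^sub>R x) ` G') (real q + dK * \<delta>)" by (rule close_trans[OF cl3 cl2])
  define E where "E = Cq q ` K'"
  have Eeq: "(Cq_conj q F ^^ n) ` unit_square = E"
  proof -
    have "Cq_conj q F ^^ n = Cq_conj q Fn" unfolding Fn_def by (rule funpow_Cq[OF q])
    then show ?thesis unfolding E_def K'_def Cq_conj_def by (simp add: image_comp)
  qed
  define T where "T = (\<lambda>x. dK *\<^sub>R x + 0) ` G1"
  have T_eq: "Cq q ` ((\<lambda>x. dK *\<^sub>R x) ` G') = T"
    unfolding T_def G1(2) image_image using linear_Cq[of q] by (simp add: linear_scale CC2[OF q])
  define \<epsilon> where "\<epsilon> = real q + dK * \<delta>"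
  have cl5: "close E T \<epsilon>"
    using close_image[OF cl4 dist_Cq[OF q] zero_le_one] unfolding E_def T_eq \<epsilon>_def by simp
  have Ec: "compact E" "E \<noteq> {}"
  proof -
    have "compact (Cq_inv q ` unit_square)"
      using compact_us linear_Cq_inv[of q]
      by (auto intro!: compact_continuous_image linear_continuous_on linear_conv_bounded_linear[THEN iffD1])
    moreover have "continuous_on (Cq_inv q ` unit_square) Fn" by (rule continuous_on_subset[OF Fnc]) simp
    ultimately have "compact K'" unfolding K'_def using compact_continuous_image by blast
    then show "compact E" unfolding E_def using linear_Cq[of q]
      by (auto intro!: compact_continuous_image linear_continuous_on linear_conv_bounded_linear[THEN iffD1])
    show "E \<noteq> {}" unfolding E_def K'_def using compact_us by auto
  qed
  have Tc: "bounded T" "T \<noteq> {}" unfolding T_def using G1c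
    by (auto intro!: compact_imp_bounded compact_continuous_image continuous_intros)
  define g where "g = diameter G1"
  have "diameter G' \<le> real q * g"
    unfolding G1(2) g_def by (rule diam_lip[OF compact_imp_bounded[OF G1c(1)] G1c(2) dist_Cq_inv[OF q]]) simp
  then have gq: "g * real q \<ge> 1" using LA1'(3) by (simp add: mult.commute)
  define dT where "dT = diameter T"
  have dT: "dT = dK * g" unfolding dT_def T_def g_def
    by (rule diam_affine[OF compact_imp_bounded[OF G1c(1)] G1c(2) dK0])
  define dE where "dE = diameter E"
  have d1: "dT \<le> dE + 2 * \<epsilon>"
    unfolding dT_def dE_def by (rule close_diam[OF Tc(1) compact_imp_bounded[OF Ec(1)] Tc(2) Ec(2) close_sym[OF cl5]])
  have d2: "dE \<le> dT + 2 * \<epsilon>"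
    unfolding dT_def dE_def by (rule close_diam[OF compact_imp_bounded[OF Ec(1)] Tc(1) Ec(2) Tc(2) cl5])
  have e0: "\<epsilon> \<ge> 0" by (rule close_nonneg[OF cl5 Ec(2)])
  have eb: "\<epsilon> \<le> real q + dK / r"
  proof -
    have "dK * \<delta> \<le> dK * (1 / r)" using \<delta>r dK0 by (intro mult_left_mono) auto
    then show ?thesis unfolding \<epsilon>_def by simp
  qed
  have AR: "dE > real k \<and> 3 * \<epsilon> / dE < 1 / real k"
    by (rule arith_main[OF _ _ r LA1'(1) eb e0 gq]) (use q k d1 dT in auto)
  have dE0: "dE > 0" using AR k by linarith
  have g0: "g > 0"
  proof (rule ccontr)
    assume "\<not> g > 0"
    then have "g * real q \<le> 0" by (simp add: mult_nonpos_nonneg)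
    then show False using gq by linarith
  qed
  have dT0: "dT > 0" using dT dK0 g0 by simp
  obtain t0 where t0: "t0 \<in> T" using Tc(2) by blast
  define w where "w = (1 / dE) *\<^sub>R t0 - (1 / dT) *\<^sub>R t0"
  define G where "G = (\<lambda>x. (1 / dT) *\<^sub>R x + w) ` T"
  have TG: "T \<in> \<Gamma>" unfolding T_def K0(1) by (rule hom_class_affine[OF G1(1)[unfolded K0(1)] dK0])
  have GG: "G \<in> \<Gamma>" unfolding G_def K0(1) by (rule hom_class_affine[OF TG[unfolded K0(1)]]) (use dT0 in simp)
  have dG: "diameter G = 1" unfolding G_def
    using diam_affine[OF Tc, of "1 / dT" w] dT0 unfolding dT_def by simp
  have cl6: "close ((\<lambda>x. (1 / dE) *\<^sub>R x) ` E) ((\<lambda>x. (1 / dE) *\<^sub>R x) ` T) ((1 / dE) * \<epsilon>)"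
    by (rule close_image[OF cl5 dist_scale]) (use dE0 in auto)
  have cl7: "close ((\<lambda>x. (1 / dE) *\<^sub>R x) ` T) G (2 * \<epsilon> / dE)"
    unfolding G_def
  proof (rule close_maps)
    fix x assume x: "x \<in> T"
    have "dist ((1 / dE) *\<^sub>R x) ((1 / dT) *\<^sub>R x + w) = norm ((1 / dE - 1 / dT) *\<^sub>R (x - t0))"
      unfolding w_def dist_norm by (simp add: algebra_simps)
    also have "\<dots> = \<bar>1 / dE - 1 / dT\<bar> * dist x t0" by (simp add: dist_norm)
    also have "\<dots> \<le> \<bar>1 / dE - 1 / dT\<bar> * dT"
      by (rule mult_left_mono) (use diameter_bounded_bound[OF Tc(1) x t0] in \<open>auto simp: dT_def\<close>)
    also have "\<bar>1 / dE - 1 / dT\<bar> * dT = \<bar>dT - dE\<bar> / dE"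
    proof -
      have "1 / dE - 1 / dT = (dT - dE) / (dE * dT)" using dE0 dT0 by (simp add: field_simps)
      then show ?thesis using dE0 dT0 by (simp add: abs_div)
    qed
    also have "\<dots> \<le> 2 * \<epsilon> / dE"
      by (rule divide_right_mono) (use d1 d2 dE0 in auto)
    finally show "dist ((1 / dE) *\<^sub>R x) ((1 / dT) *\<^sub>R x + w) \<le> 2 * \<epsilon> / dE" .
  qed
  have cl8: "close ((\<lambda>x. (1 / dE) *\<^sub>R x) ` E) G (3 * \<epsilon> / dE)"
    using close_trans[OF cl6 cl7] by (simp add: field_simps)
  have hd: "hausdorff_dist ((\<lambda>x. (1 / dE) *\<^sub>R x) ` E) G < 1 / real k"
    using close_hd[OF _ _ cl8] Ec(2) t0 AR unfolding G_def by force
  show ?thesis unfolding Eeq LA_def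
    using Ec AR GG dG hd unfolding dE_def by blast
qed

theorem mainTheorem10:
  fixes \<Gamma> :: "pt set set" and q k :: nat
  assumes "\<Gamma> \<in> Hspace" and "q \<ge> 1" and "k \<ge> 1"
  shows "\<exists>l::nat. l \<ge> 1 \<and> (\<forall>F \<in> P l (Cq_inv_class q \<Gamma>). Cq_conj q F \<in> P k \<Gamma>)"
proof (intro exI conjI ballI)
  define l where "l = 20 * q^2 * (k + 1)"
  have "1 \<le> q^2" using one_le_power[OF assms(2), of 2] .
  moreover have "q^2 \<le> l" unfolding l_def by simp
  ultimately show "l \<ge> 1" by linarith
  fix F assume "F \<in> P l (Cq_inv_class q \<Gamma>)"
  then have F: "F \<in> Obar_lifts" and "\<exists>n::nat. n \<ge> 1 \<and> (F ^^ n) ` unit_square \<in> LA (real l) (Cq_inv_class q \<Gamma>)"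
    unfolding P_def by blast+
  then obtain n :: nat where n: "n \<ge> 1" "(F ^^ n) ` unit_square \<in> LA (real l) (Cq_inv_class q \<Gamma>)" by blast
  have "(Cq_conj q F ^^ n) ` unit_square \<in> LA (real k) \<Gamma>"
    by (rule LA_transfer[OF assms(2,3,1) l_def F n(2)])
  then show "Cq_conj q F \<in> P k \<Gamma>"
    unfolding P_def using Obar_Cq[OF assms(2) F] n(1) by blast
qed

end
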